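(* Let $n$ be a positive integer and $m$ a positive even integer. Let $\mathcal{A}$ and $\mathcal{B}$ be $m$-th order $n$-dimensional real weakly symmetric tensors with $\mathcal{B}$ positive definite, and let $\lambda_{\max}$ be the largest $\mathcal{B}_r$-eigenvalue of $\mathcal{A}$. Define $f_2:\mathbb{R}^n\to\mathbb{R}$ by $$f_2(x)=\frac{1}{2m}(\mathcal{B}x^m)^2-\frac{1}{m}\mathcal{A}x^m,$$ whose gradient is $\nabla f_2(x)=(\mathcal{B}x^m)\,\mathcal{B}x^{m-1}-\mathcal{A}x^{m-1}$. Then: (a) $f_2$ is coercive on $\mathbb{R}^n$, i.e. $f_2(x)\to+\infty$ as $\|x\|\to\infty$. (b) The critical points of $f_2$ are (i) $x=0$, and (ii) any $\mathcal{B}_r$-eigenvector $x$ of $\mathcal{A}$ associated with a $\mathcal{B}_r$-eigenvalue $\lambda>0$ of $\mathcal{A}$ satisfying $\mathcal{B}x^m=\lambda$. (c) If $\lambda_{\max}>0$, then $f_2$ attains its global minimum value $\min f_2(x)=-\frac{1}{2m}\lambda_{\max}^2$ at any $\mathcal{B}_r$-eigenvector associated with $\lambda_{\max}$ satisfying $\mathcal{B}x^m=\lambda_{\max}$. (d) If $\lambda_{\max}\le0$, then $x=0$ is the unique critical point of $f_2$, and it is the unique global minimizer of $f_2$ on $\mathbb{R}^n$.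
   Context: An $m$-th order $n$-dimensional real tensor is an array $\mathcal{A}=(A_{i_1\cdots i_m})$ with indices in $\{1,\dots,n\}$ and real entries. For $x\in\mathbb{R}^n$, $\mathcal{A}x^m=\sum_{i_1,\dots,i_m=1}^n A_{i_1\cdots i_m}x_{i_1}\cdots x_{i_m}$, and $\mathcal{A}x^{m-1}\in\mathbb{R}^n$ has $i$-th entry $\sum_{i_2,\dots,i_m=1}^n A_{i i_2\cdots i_m}x_{i_2}\cdots x_{i_m}$. A tensor is weakly symmetric if $\nabla(\mathcal{A}x^m)=m\,\mathcal{A}x^{m-1}$ for all $x$, and positive definite if $\mathcal{A}x^m>0$ for all $x\ne0$. With $\mathcal{B}$ weakly symmetric positive definite, $\lambda\in\mathbb{R}$ is a $\mathcal{B}_r$-eigenvalue of $\mathcal{A}$, with $\mathcal{B}_r$-eigenvector $x\in\mathbb{R}^n\setminus\{0\}$, if $\mathcal{A}x^{m-1}=\lambda\,\mathcal{B}x^{m-1}$. The set of $\mathcal{B}_r$-eigenvalues is nonempty and has a largest element $\lambda_{\max}$. *)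

theory Defs
  imports "HOL-Analysis.Analysis"
begin

text \<open>An m-th order tensor with index type 'n is a function from index lists
  (of length m) to the reals; entries at lists of other lengths are irrelevant.\<close>
type_synonym 'n tensor = "'n list \<Rightarrow> real"

definition tform :: "nat \<Rightarrow> ('n::finite) tensor \<Rightarrow> real^'n \<Rightarrow> real" where
  "tform m A x = (\<Sum>is\<in>{is. length is = m}. A is * prod_list (map (\<lambda>j. x $ j) is))"

definition tvec :: "nat \<Rightarrow> ('n::finite) tensor \<Rightarrow> real^'n \<Rightarrow> real^'n" where
  "tvec m A x = (\<chi> i. \<Sum>is\<in>{is. length is = m - 1}. A (i # is) * prod_list (map (\<lambda>j. x $ j) is))"

definition weakly_symmetric :: "nat \<Rightarrow> ('n::finite) tensor \<Rightarrow> bool" where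
  "weakly_symmetric m A \<longleftrightarrow>
     (\<forall>x. ((\<lambda>y. tform m A y) has_derivative (\<lambda>h. (of_nat m *\<^sub>R tvec m A x) \<bullet> h)) (at x))"

definition pos_def_tensor :: "nat \<Rightarrow> ('n::finite) tensor \<Rightarrow> bool" where
  "pos_def_tensor m A \<longleftrightarrow> (\<forall>x. x \<noteq> 0 \<longrightarrow> tform m A x > 0)"

definition Br_eigenpair :: "nat \<Rightarrow> ('n::finite) tensor \<Rightarrow> 'n tensor \<Rightarrow> real \<Rightarrow> real^'n \<Rightarrow> bool" where
  "Br_eigenpair m A B lam x \<longleftrightarrow> x \<noteq> 0 \<and> tvec m A x = lam *\<^sub>R tvec m B x"

definition Br_eigenvalue :: "nat \<Rightarrow> ('n::finite) tensor \<Rightarrow> 'n tensor \<Rightarrow> real \<Rightarrow> bool" where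
  "Br_eigenvalue m A B lam \<longleftrightarrow> (\<exists>x. Br_eigenpair m A B lam x)"

definition f2 :: "nat \<Rightarrow> ('n::finite) tensor \<Rightarrow> 'n tensor \<Rightarrow> real^'n \<Rightarrow> real" where
  "f2 m A B x = (1 / (2 * real m)) * (tform m B x)^2 - (1 / real m) * tform m A x"

definition critical_point :: "(real^'n \<Rightarrow> real) \<Rightarrow> real^('n::finite) \<Rightarrow> bool" where
  "critical_point f x \<longleftrightarrow> (f has_derivative (\<lambda>h. 0)) (at x)"

end

theory Submission
  imports Defs
begin

lemma fin_len: "finite {is::('n::finite) list. length is = k}"
  using finite_lists_length_eq[of "UNIV::'n set" k] by simp

lemma sum_len_Suc:
  fixes g :: "('n::finite) list \<Rightarrow> real"
  shows "sum g {is. length is = Suc k} = (\<Sum>i\<in>UNIV. \<Sum>is\<in>{is. length is = k}. g (i # is))"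
proof -
  have eq: "{is::'n list. length is = Suc k} = (\<lambda>(i,is). i # is) ` (UNIV \<times> {is. length is = k})"
    by (auto simp: length_Suc_conv image_iff)
  have inj: "inj_on (\<lambda>(i,is). i # is) (UNIV \<times> {is::'n list. length is = k})"
    by (auto simp: inj_on_def)
  have "sum g {is. length is = Suc k} = (\<Sum>p\<in>UNIV \<times> {is. length is = k}. g (fst p # snd p))"
    unfolding eq by (subst sum.reindex[OF inj]) (auto intro!: sum.cong)
  also have "\<dots> = (\<Sum>i\<in>UNIV. \<Sum>is\<in>{is. length is = k}. g (i # is))"
    by (simp add: sum.cartesian_product split_beta)
  finally show ?thesis .
qed

lemma euler:
  assumes "m > 0"
  shows "tvec m A x \<bullet> x = tform m A x"
proof -
  obtain k where m: "m = Suc k" using assms gr0_conv_Suc by blast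
  have "tvec m A x \<bullet> x = (\<Sum>i\<in>UNIV. (\<Sum>is\<in>{is. length is = k}. A (i # is) * prod_list (map (\<lambda>j. x $ j) is)) * x $ i)"
    by (simp add: tvec_def inner_vec_def m mult.commute)
  also have "\<dots> = (\<Sum>i\<in>UNIV. \<Sum>is\<in>{is. length is = k}. A (i # is) * prod_list (map (\<lambda>j. x $ j) (i # is)))"
    by (simp add: sum_distrib_right sum_distrib_left mult_ac)
  also have "\<dots> = tform m A x"
    unfolding tform_def m by (rule sum_len_Suc[symmetric])
  finally show ?thesis .
qed

lemma prod_scale: "prod_list (map (\<lambda>j. (c *\<^sub>R x) $ j) is) = c ^ length is * prod_list (map (\<lambda>j. x $ j) is)"
  by (induction "is") auto

lemma tform_scale: "tform m A (c *\<^sub>R x) = c ^ m * tform m A x"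
  unfolding tform_def by (simp add: prod_scale sum_distrib_left mult_ac)

lemma tvec_scale: "tvec m A (c *\<^sub>R x) = c ^ (m - 1) *\<^sub>R tvec m A x"
  unfolding tvec_def by (simp add: vec_eq_iff prod_scale sum_distrib_left mult_ac)

lemma tform_zero: "m > 0 \<Longrightarrow> tform m A 0 = 0"
  using tform_scale[of m A 0 0] by (simp add: power_0_left)

lemma tvec_zero: "m > 1 \<Longrightarrow> tvec m A 0 = 0"
  using tvec_scale[of m A 0 0] by (simp add: power_0_left)

lemma coerc_arith:
  fixes bt al t Z M :: real
  assumes "bt > 0" "M > 0" "t \<ge> 1" "t \<ge> (2*al + 2*M*\<bar>Z\<bar>) / bt^2" "al \<ge> 0"
  shows "Z \<le> (t * bt)^2 / (2*M) - t * al / M"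
proof -
  have h0: "t * bt^2 \<ge> 2*al + 2*M*\<bar>Z\<bar>" using assms(1,4) by (simp add: field_simps)
  have "t * (t * bt^2) \<ge> t * (2*al + 2*M*\<bar>Z\<bar>)" using h0 assms(3) by (intro mult_left_mono) auto
  hence h1: "t * (t * bt^2) \<ge> t * (2*al) + t * (2*M*\<bar>Z\<bar>)" by (simp add: distrib_left)
  have "1 * (2*M*\<bar>Z\<bar>) \<le> t * (2*M*\<bar>Z\<bar>)" using assms(2,3) by (intro mult_right_mono) auto
  hence h2: "2*M*\<bar>Z\<bar> \<le> t * (2*M*\<bar>Z\<bar>)" by simp
  have h3: "2*M*Z \<le> 2*M*\<bar>Z\<bar>" using assms(2) by (intro mult_left_mono) auto
  have h4: "(t*bt)^2 = t * (t * bt^2)" by (simp add: power2_eq_square)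
  have h5: "2*M*Z \<le> (t*bt)^2 - 2*t*al" using h1 h2 h3 h4 by linarith
  have "Z \<le> ((t*bt)^2 - 2*t*al) / (2*M)" using h5 assms(2) by (simp add: pos_le_divide_eq mult.commute)
  also have "\<dots> = (t * bt)^2 / (2*M) - t * al / M" using assms(2) by (simp add: field_simps)
  finally show ?thesis .
qed

theorem theorem6:
  fixes A B :: "('n::finite) tensor" and m :: nat and lmax :: real
  assumes "m > 0" and "even m"
    and "weakly_symmetric m A" and "weakly_symmetric m B"
    and "pos_def_tensor m B"
    and "Br_eigenvalue m A B lmax"
    and "\<forall>lam. Br_eigenvalue m A B lam \<longrightarrow> lam \<le> lmax"
  shows
    "(\<forall>x. (f2 m A B has_derivative
            (\<lambda>h. (tform m B x *\<^sub>R tvec m B x - tvec m A x) \<bullet> h)) (at x))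
     \<and> filterlim (f2 m A B) at_top at_infinity
     \<and> {x. critical_point (f2 m A B) x} =
         {0} \<union> {x. \<exists>lam. lam > 0 \<and> Br_eigenpair m A B lam x \<and> tform m B x = lam}
     \<and> (lmax > 0 \<longrightarrow>
          (\<exists>x. Br_eigenpair m A B lmax x \<and> tform m B x = lmax)
          \<and> (\<forall>x. Br_eigenpair m A B lmax x \<and> tform m B x = lmax \<longrightarrow>
                 (\<forall>y. f2 m A B x \<le> f2 m A B y)
                 \<and> f2 m A B x = - (1 / (2 * real m)) * lmax\<^sup>2))
     \<and> (lmax \<le> 0 \<longrightarrow>
          {x. critical_point (f2 m A B) x} = {0}
          \<and> (\<forall>y. f2 m A B 0 \<le> f2 m A B y)
          \<and> (\<forall>x. (\<forall>y. f2 m A B x \<le> f2 m A B y) \<longrightarrow> x = 0))"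
proof -
  have m1: "m > 1" using assms(1,2) by (cases "m = 1") auto
  have dA: "\<And>x. (tform m A has_derivative (\<lambda>h. (real m *\<^sub>R tvec m A x) \<bullet> h)) (at x)"
    using assms(3) unfolding weakly_symmetric_def by blast
  have dB: "\<And>x. (tform m B has_derivative (\<lambda>h. (real m *\<^sub>R tvec m B x) \<bullet> h)) (at x)"
    using assms(4) unfolding weakly_symmetric_def by blast
  have contA: "continuous_on UNIV (tform m A)"
    by (meson continuous_at_imp_continuous_on dA has_derivative_continuous)
  have contB: "continuous_on UNIV (tform m B)"
    by (meson continuous_at_imp_continuous_on dB has_derivative_continuous)
  have posB: "\<And>x. x \<noteq> 0 \<Longrightarrow> tform m B x > 0" using assms(5) unfolding pos_def_tensor_def by blast
  define g where "g x = tform m B x *\<^sub>R tvec m B x - tvec m A x" for x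
  have df: "(f2 m A B has_derivative (\<lambda>h. g x \<bullet> h)) (at x)" for x
  proof -
    have d1: "((\<lambda>y. tform m B y * tform m B y) has_derivative
        (\<lambda>h. tform m B x * ((real m *\<^sub>R tvec m B x) \<bullet> h) + ((real m *\<^sub>R tvec m B x) \<bullet> h) * tform m B x)) (at x)"
      by (rule has_derivative_mult[OF dB dB])
    have d2: "((\<lambda>y. (1/(2*real m)) * (tform m B y * tform m B y) - (1/real m) * tform m A y) has_derivative
        (\<lambda>h. (1/(2*real m)) * (tform m B x * ((real m *\<^sub>R tvec m B x) \<bullet> h) + ((real m *\<^sub>R tvec m B x) \<bullet> h) * tform m B x)
             - (1/real m) * ((real m *\<^sub>R tvec m A x) \<bullet> h))) (at x)"
      by (rule has_derivative_diff[OF has_derivative_mult_right[OF d1] has_derivative_mult_right[OF dA[of x]]])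
    have eq: "(\<lambda>h. (1/(2*real m)) * (tform m B x * ((real m *\<^sub>R tvec m B x) \<bullet> h) + ((real m *\<^sub>R tvec m B x) \<bullet> h) * tform m B x)
             - (1/real m) * ((real m *\<^sub>R tvec m A x) \<bullet> h)) = (\<lambda>h. g x \<bullet> h)"
    proof
      fix h
      have mm: "real m \<noteq> 0" using assms(1) by simp
      have "(1/(2*real m)) * (tform m B x * ((real m *\<^sub>R tvec m B x) \<bullet> h) + ((real m *\<^sub>R tvec m B x) \<bullet> h) * tform m B x)
           = tform m B x * (tvec m B x \<bullet> h)" using mm by (simp add: field_simps)
      moreover have "(1/real m) * ((real m *\<^sub>R tvec m A x) \<bullet> h) = tvec m A x \<bullet> h" using mm by simp
      moreover have "g x \<bullet> h = tform m B x * (tvec m B x \<bullet> h) - tvec m A x \<bullet> h"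
        unfolding g_def by (simp add: inner_diff_left)
      ultimately show "(1/(2*real m)) * (tform m B x * ((real m *\<^sub>R tvec m B x) \<bullet> h) + ((real m *\<^sub>R tvec m B x) \<bullet> h) * tform m B x)
             - (1/real m) * ((real m *\<^sub>R tvec m A x) \<bullet> h) = g x \<bullet> h" by simp
    qed
    have "((\<lambda>y. (1/(2*real m)) * (tform m B y * tform m B y) - (1/real m) * tform m A y)
           has_derivative (\<lambda>h. g x \<bullet> h)) (at x)"
      using d2 eq by simp
    moreover have "(\<lambda>y. (1/(2*real m)) * (tform m B y * tform m B y) - (1/real m) * tform m A y) = f2 m A B"
      by (auto simp: f2_def power2_eq_square)
    ultimately show ?thesis by simp
  qed
  have contf: "continuous_on UNIV (f2 m A B)"
    by (meson continuous_at_imp_continuous_on df has_derivative_continuous)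
  have P1: "\<forall>x. (f2 m A B has_derivative
            (\<lambda>h. (tform m B x *\<^sub>R tvec m B x - tvec m A x) \<bullet> h)) (at x)"
    using df unfolding g_def by blast
  have f20: "f2 m A B 0 = 0" using assms(1) by (simp add: f2_def tform_zero)
  have g0: "g 0 = 0" using assms(1) m1 by (simp add: g_def tform_zero tvec_zero)
  define S where "S = sphere (0::real^'n) 1"
  have Sc: "compact S" and Sne: "S \<noteq> {}" unfolding S_def by auto
  obtain u where u: "u \<in> S" "\<forall>y\<in>S. tform m B u \<le> tform m B y"
    using continuous_attains_inf[OF Sc Sne continuous_on_subset[OF contB]] by blast
  define bt where "bt = tform m B u"
  have "u \<noteq> 0" using u(1) unfolding S_def by auto
  hence bt: "bt > 0" using posB unfolding bt_def by blast
  obtain a where a: "a \<in> S" "\<forall>y\<in>S. norm (tform m A y) \<le> norm (tform m A a)"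
    using continuous_attains_sup[OF Sc Sne continuous_on_norm[OF continuous_on_subset[OF contA]]] by blast
  define al where "al = norm (tform m A a)"
  have al: "al \<ge> 0" unfolding al_def by simp
  have bound: "(norm x ^ m * bt)^2 / (2*real m) - norm x ^ m * al / real m \<le> f2 m A B x" if "x \<noteq> 0" for x
  proof -
    define r where "r = norm x"
    have r: "r > 0" using that unfolding r_def by simp
    define v where "v = (1/r) *\<^sub>R x"
    have vS: "v \<in> S" using r unfolding v_def S_def r_def by simp
    have xv: "x = r *\<^sub>R v" using r unfolding v_def by simp
    have Bx: "tform m B x = r^m * tform m B v" using xv tform_scale by metis
    have Ax: "tform m A x = r^m * tform m A v" using xv tform_scale by metis
    have "r^m * bt \<le> tform m B x" unfolding Bx bt_def using u vS r by (simp add: mult_left_mono)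
    moreover have "0 \<le> r^m * bt" using r bt by simp
    ultimately have 1: "(r^m * bt)^2 \<le> (tform m B x)^2" by (simp add: power_mono)
    have "tform m A v \<le> al" using a vS unfolding al_def by force
    hence 2: "tform m A x \<le> r^m * al" unfolding Ax using r by (simp add: mult_left_mono)
    have "(r^m * bt)^2 / (2*real m) \<le> (tform m B x)^2 / (2*real m)"
      using 1 assms(1) by (simp add: divide_right_mono)
    moreover have "tform m A x / real m \<le> r^m * al / real m" using 2 assms(1) by (simp add: divide_right_mono)
    ultimately show ?thesis unfolding r_def f2_def by simp
  qed
  have P2: "filterlim (f2 m A B) at_top at_infinity"
  proof (rule filterlim_at_top[THEN iffD2], intro allI)
    fix Z :: real
    define b where "b = max 1 ((2*al + 2*real m*\<bar>Z\<bar>) / bt^2)"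
    have "Z \<le> f2 m A B x" if "b \<le> norm x" for x
    proof -
      have x1: "1 \<le> norm x" using that unfolding b_def by simp
      hence "x \<noteq> 0" by auto
      have "norm x ^ 1 \<le> norm x ^ m" using x1 assms(1) by (intro power_increasing) auto
      hence "b \<le> norm x ^ m" using that by simp
      hence "Z \<le> (norm x ^ m * bt)^2 / (2*real m) - norm x ^ m * al / real m"
        using bt assms(1) al unfolding b_def by (intro coerc_arith) auto
      also have "\<dots> \<le> f2 m A B x" using bound \<open>x \<noteq> 0\<close> by blast
      finally show ?thesis .
    qed
    thus "eventually (\<lambda>x. Z \<le> f2 m A B x) at_infinity"
      unfolding eventually_at_infinity by blast
  qed
  have "eventually (\<lambda>x. f2 m A B 0 + 1 \<le> f2 m A B x) at_infinity"
    using P2 filterlim_at_top by blast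
  then obtain b where b: "\<And>x. b \<le> norm x \<Longrightarrow> f2 m A B 0 + 1 \<le> f2 m A B x"
    unfolding eventually_at_infinity by blast
  obtain z where z: "z \<in> cball 0 b" "\<forall>y\<in>cball 0 b. f2 m A B z \<le> f2 m A B y"
  proof (cases "b < 0")
    case True
    then show ?thesis using b[of 0] by simp
  next
    case False
    then show ?thesis
      using continuous_attains_inf[OF compact_cball _ continuous_on_subset[OF contf], of 0 b] that by auto
  qed
  have zmin: "\<forall>y. f2 m A B z \<le> f2 m A B y"
  proof
    fix y
    show "f2 m A B z \<le> f2 m A B y"
    proof (cases "y \<in> cball 0 b")
      case True thus ?thesis using z by blast
    next
      case False
      hence "b \<le> norm y" by simp
      hence "f2 m A B 0 + 1 \<le> f2 m A B y" by (rule b)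
      moreover have "b \<ge> 0"
      proof (rule ccontr)
        assume "\<not> b \<ge> 0"
        hence "b \<le> norm (0::real^'n)" by simp
        from b[OF this] show False by simp
      qed
      hence "f2 m A B z \<le> f2 m A B 0" using z(2) by simp
      ultimately show ?thesis by simp
    qed
  qed
  have crit_iff: "critical_point (f2 m A B) x \<longleftrightarrow> g x = 0" for x
  proof
    assume "critical_point (f2 m A B) x"
    hence "(\<lambda>h. g x \<bullet> h) = (\<lambda>h. 0)" unfolding critical_point_def using df has_derivative_unique by blast
    hence "g x \<bullet> g x = 0" by metis
    thus "g x = 0" by simp
  next
    assume "g x = 0"
    thus "critical_point (f2 m A B) x" unfolding critical_point_def using df[of x] by simp
  qed
  have min_crit: "critical_point (f2 m A B) x" if "\<forall>y. f2 m A B x \<le> f2 m A B y" for x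
    unfolding critical_point_def
    using differential_zero_maxmin[of x UNIV "f2 m A B" "\<lambda>h. g x \<bullet> h"] df[of x] that by auto
  have P3: "{x. critical_point (f2 m A B) x} =
         {0} \<union> {x. \<exists>lam. lam > 0 \<and> Br_eigenpair m A B lam x \<and> tform m B x = lam}"
  proof (intro set_eqI iffI)
    fix x assume "x \<in> {x. critical_point (f2 m A B) x}"
    hence gx: "g x = 0" using crit_iff by blast
    show "x \<in> {0} \<union> {x. \<exists>lam. lam > 0 \<and> Br_eigenpair m A B lam x \<and> tform m B x = lam}"
    proof (cases "x = 0")
      case False
      hence "tform m B x > 0" using posB by blast
      moreover have "tvec m A x = tform m B x *\<^sub>R tvec m B x" using gx unfolding g_def by simp
      ultimately show ?thesis using False unfolding Br_eigenpair_def by auto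
    qed simp
  next
    fix x assume "x \<in> {0} \<union> {x. \<exists>lam. lam > 0 \<and> Br_eigenpair m A B lam x \<and> tform m B x = lam}"
    hence "g x = 0" using g0 unfolding g_def Br_eigenpair_def by auto
    thus "x \<in> {x. critical_point (f2 m A B) x}" using crit_iff by blast
  qed
  have fval: "f2 m A B x = - (1 / (2 * real m)) * lam\<^sup>2"
    if "Br_eigenpair m A B lam x" "tform m B x = lam" for x lam
  proof -
    have "tform m A x = tvec m A x \<bullet> x" using euler assms(1) by metis
    also have "\<dots> = lam * (tvec m B x \<bullet> x)" using that unfolding Br_eigenpair_def by simp
    also have "\<dots> = lam^2" using euler[OF assms(1), of B x] that(2) by (simp add: power2_eq_square)
    finally show ?thesis unfolding f2_def using that(2) assms(1) by (simp add: field_simps power2_eq_square)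
  qed
  have zcases: "z = 0 \<or> (\<exists>lam. lam > 0 \<and> Br_eigenpair m A B lam z \<and> tform m B z = lam)"
    using min_crit[OF zmin] P3 by blast
  have P4: "lmax > 0 \<longrightarrow>
          (\<exists>x. Br_eigenpair m A B lmax x \<and> tform m B x = lmax)
          \<and> (\<forall>x. Br_eigenpair m A B lmax x \<and> tform m B x = lmax \<longrightarrow>
                 (\<forall>y. f2 m A B x \<le> f2 m A B y)
                 \<and> f2 m A B x = - (1 / (2 * real m)) * lmax\<^sup>2)"
  proof (intro impI conjI allI)
    assume lp: "lmax > 0"
    obtain y where y: "Br_eigenpair m A B lmax y" using assms(6) unfolding Br_eigenvalue_def by blast
    define c where "c = tform m B y"
    have c: "c > 0" using y posB unfolding c_def Br_eigenpair_def by blast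
    define t where "t = root m (lmax / c)"
    have t: "t > 0" using lp c assms(1) unfolding t_def by simp
    have tm: "t ^ m = lmax / c" unfolding t_def using assms(1) lp c by (simp add: real_root_pow_pos2)
    have "tvec m A (t *\<^sub>R y) = lmax *\<^sub>R tvec m B (t *\<^sub>R y)"
      using y unfolding Br_eigenpair_def by (simp add: tvec_scale)
    moreover have "t *\<^sub>R y \<noteq> 0" using t y unfolding Br_eigenpair_def by simp
    moreover have "tform m B (t *\<^sub>R y) = lmax" using tm c unfolding c_def by (simp add: tform_scale)
    ultimately show "\<exists>x. Br_eigenpair m A B lmax x \<and> tform m B x = lmax"
      unfolding Br_eigenpair_def by blast
  next
    fix x assume lp: "lmax > 0" and x: "Br_eigenpair m A B lmax x \<and> tform m B x = lmax"
    show fx: "f2 m A B x = - (1 / (2 * real m)) * lmax\<^sup>2" using fval x by blast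
    have "f2 m A B x \<le> f2 m A B z"
      using zcases
    proof
      assume "z = 0" thus ?thesis using fx f20 assms(1) by simp
    next
      assume "\<exists>lam. lam > 0 \<and> Br_eigenpair m A B lam z \<and> tform m B z = lam"
      then obtain lam where l: "lam > 0" "Br_eigenpair m A B lam z" "tform m B z = lam" by blast
      have "lam \<le> lmax" using assms(7) l(2) unfolding Br_eigenvalue_def by blast
      hence "lam^2 \<le> lmax^2" using l(1) by (simp add: power_mono)
      hence "(1 / (2 * real m)) * lam^2 \<le> (1 / (2 * real m)) * lmax^2" by (intro mult_left_mono) auto
      thus ?thesis using fx fval[OF l(2,3)] by simp
    qed
    thus "f2 m A B x \<le> f2 m A B y" for y using zmin order_trans by blast
  qed
  have P5: "lmax \<le> 0 \<longrightarrow>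
          {x. critical_point (f2 m A B) x} = {0}
          \<and> (\<forall>y. f2 m A B 0 \<le> f2 m A B y)
          \<and> (\<forall>x. (\<forall>y. f2 m A B x \<le> f2 m A B y) \<longrightarrow> x = 0)"
  proof (intro impI)
    assume ln: "lmax \<le> 0"
    have none: "\<not> (\<exists>lam. lam > 0 \<and> Br_eigenpair m A B lam x \<and> tform m B x = lam)" for x
      using assms(7) ln unfolding Br_eigenvalue_def by force
    have C: "{x. critical_point (f2 m A B) x} = {0}" using P3 none by auto
    have "z = 0" using zcases none by blast
    hence M: "\<forall>y. f2 m A B 0 \<le> f2 m A B y" using zmin by simp
    have U: "\<forall>x. (\<forall>y. f2 m A B x \<le> f2 m A B y) \<longrightarrow> x = 0" using min_crit C by blast
    show "{x. critical_point (f2 m A B) x} = {0}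
          \<and> (\<forall>y. f2 m A B 0 \<le> f2 m A B y)
          \<and> (\<forall>x. (\<forall>y. f2 m A B x \<le> f2 m A B y) \<longrightarrow> x = 0)" using C M U by blast
  qed
  show ?thesis using P1 P2 P3 P4 P5 by blast
qed

end
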